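(* Let $d\ge 2$ and let $D\subset T_d$ be a domain with $|D|\ge 2$. Then $D$ is isoperimetrically optimal, i.e. $|\partial D|=I_d(|D|)$, if and only if $\tau(D)\le d-2$.
   Context: $T_d$ is the $d$-regular tree (connected, acyclic, every vertex of degree $d$). A domain is a finite nonempty connected set $D$ of vertices of $T_d$, identified with its induced subgraph. For $x\in D$, $\deg_D(x)$ is the number of neighbours of $x$ lying in $D$. The (inner vertex) boundary is $\partial D=\{x\in D:\deg_D(x)<d\}$. For $k\ge1$, $I_d(k)=\min\{|\partial D| : D\subset T_d \text{ a domain with } |D|=k\}$. For a domain with $|D|\ge 2$, the boundary branching excess is $\tau(D)=\sum_{x\in\partial D}(\deg_D(x)-1)$. *)

theory Defs
  imports Main
begin

text \<open>Concrete model of the d-regular tree T_d: vertices are lists of naturals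
  (words); the root is the empty list, it has children [i] for i < d, and every
  other vertex xs has children xs @ [i] for i < d - 1. Edges join a vertex to
  its children. For d \<ge> 2 every vertex has degree exactly d.\<close>

definition tree_vert :: "nat \<Rightarrow> nat list \<Rightarrow> bool" where
  "tree_vert d xs \<longleftrightarrow> (\<forall>i < length xs. xs ! i < (if i = 0 then d else d - 1))"

definition tree_adj :: "nat \<Rightarrow> nat list \<Rightarrow> nat list \<Rightarrow> bool" where
  "tree_adj d x y \<longleftrightarrow> tree_vert d x \<and> tree_vert d y \<and>
     ((\<exists>i. y = x @ [i]) \<or> (\<exists>i. x = y @ [i]))"

definition induced_connected :: "nat \<Rightarrow> nat list set \<Rightarrow> bool" where
  "induced_connected d D \<longleftrightarrow>
     (\<forall>x\<in>D. \<forall>y\<in>D. (x, y) \<in> {(u, v). u \<in> D \<and> v \<in> D \<and> tree_adj d u v}\<^sup>*)"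

definition domain :: "nat \<Rightarrow> nat list set \<Rightarrow> bool" where
  "domain d D \<longleftrightarrow> finite D \<and> D \<noteq> {} \<and> (\<forall>x\<in>D. tree_vert d x) \<and> induced_connected d D"

definition degD :: "nat \<Rightarrow> nat list set \<Rightarrow> nat list \<Rightarrow> nat" where
  "degD d D x = card {y \<in> D. tree_adj d x y}"

definition boundary :: "nat \<Rightarrow> nat list set \<Rightarrow> nat list set" where
  "boundary d D = {x \<in> D. degD d D x < d}"

definition isoI :: "nat \<Rightarrow> nat \<Rightarrow> nat" where
  "isoI d k = Min {card (boundary d D) | D. domain d D \<and> card D = k}"

definition tau :: "nat \<Rightarrow> nat list set \<Rightarrow> int" where
  "tau d D = (\<Sum>x\<in>boundary d D. int (degD d D x) - 1)"

end

theory Submission imports Defs "HOL-Library.Sublist" begin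

abbreviation E :: "nat \<Rightarrow> nat list set \<Rightarrow> (nat list \<times> nat list) set" where
  "E d D \<equiv> {(u, v). u \<in> D \<and> v \<in> D \<and> tree_adj d u v}"

lemma adj_sym: "tree_adj d x y \<Longrightarrow> tree_adj d y x"
  unfolding tree_adj_def by blast

lemma adj_irrefl: "\<not> tree_adj d x x"
  unfolding tree_adj_def by auto

lemma reach_prefix:
  assumes "(z,w) \<in> (E d D)\<^sup>*" "prefix p z" "p = [] \<or> p \<notin> D \<or> butlast p \<notin> D"
  shows "prefix p w"
  using assms(1,2)
proof (induction rule: rtrancl_induct)
  case base thus ?case by simp
next
  case (step u v)
  from step.hyps(2) have uv: "u \<in> D" "v \<in> D" and adj: "(\<exists>i. v = u@[i]) \<or> (\<exists>i. u = v@[i])"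
    by (auto simp: tree_adj_def)
  from adj show ?case
  proof
    assume "\<exists>i. v = u@[i]"
    then obtain i where "v = u@[i]" by blast
    with step.IH step.prems show ?thesis by simp
  next
    assume "\<exists>i. u = v@[i]"
    then obtain i where ui: "u = v@[i]" by blast
    with step.IH step.prems have "p = v@[i] \<or> prefix p v" by simp
    thus ?thesis
    proof
      assume "p = v@[i]"
      with ui uv assms(3) show ?thesis by simp
    qed
  qed
qed

lemma domain_tv: "domain d D \<Longrightarrow> x \<in> D \<Longrightarrow> tree_vert d x"
  unfolding domain_def by blast

lemma domain_conn: "domain d D \<Longrightarrow> x \<in> D \<Longrightarrow> y \<in> D \<Longrightarrow> (x,y) \<in> (E d D)\<^sup>*"
  unfolding domain_def induced_connected_def by blast

lemma tops_unique:
  assumes "domain d D" "t1 \<in> D" "t2 \<in> D" "t1 = [] \<or> butlast t1 \<notin> D" "t2 = [] \<or> butlast t2 \<notin> D"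
  shows "t1 = t2"
proof -
  have "prefix t1 t2" using reach_prefix[OF domain_conn[OF assms(1,2,3)], of t1] assms(4) by auto
  moreover have "prefix t2 t1" using reach_prefix[OF domain_conn[OF assms(1,3,2)], of t2] assms(5) by auto
  ultimately show ?thesis by (rule prefix_order.antisym)
qed

lemma top_exists:
  assumes "domain d D"
  shows "\<exists>t\<in>D. t = [] \<or> butlast t \<notin> D"
proof -
  have fin: "finite D" "D \<noteq> {}" using assms unfolding domain_def by auto
  define m where "m = Min (length ` D)"
  have "m \<in> length ` D" unfolding m_def using fin by auto
  then obtain t where t: "t \<in> D" "length t = m" by auto
  have "t = [] \<or> butlast t \<notin> D"
  proof (rule ccontr)
    assume "\<not> ?thesis"
    hence "butlast t \<in> D" "t \<noteq> []" by auto
    hence "m \<le> length (butlast t)" unfolding m_def using fin by (intro Min_le) (auto intro!: image_eqI)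
    moreover have "m > 0" using t \<open>t \<noteq> []\<close> by auto
    ultimately show False using t by simp
  qed
  with t show ?thesis by blast
qed

definition Pset :: "nat list set \<Rightarrow> nat list set" where
  "Pset D = {y \<in> D. y \<noteq> [] \<and> butlast y \<in> D}"

lemma card_Pset:
  assumes "domain d D"
  shows "card (Pset D) + 1 = card D"
proof -
  have fin: "finite D" using assms unfolding domain_def by auto
  obtain t where t: "t \<in> D" "t = [] \<or> butlast t \<notin> D" using top_exists[OF assms] by blast
  have "D - Pset D = {t}"
    using tops_unique[OF assms _ t(1) _ t(2)] t unfolding Pset_def by blast
  have PD: "Pset D \<subseteq> D" unfolding Pset_def by auto
  have fP: "finite (Pset D)" using fin unfolding Pset_def by auto
  have c1: "card (D - Pset D) = card D - card (Pset D)" using card_Diff_subset[OF fP PD] .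
  have c2: "card (Pset D) \<le> card D" using card_mono[OF fin PD] .
  have "card (D - Pset D) = 1" using \<open>D - Pset D = {t}\<close> by simp
  thus ?thesis using c1 c2 by simp
qed

lemma tv_snoc: "tree_vert d (x@[i]) \<longleftrightarrow> tree_vert d x \<and> i < (if x = [] then d else d - 1)"
  unfolding tree_vert_def
  by (auto simp: nth_append less_Suc_eq split: if_splits)

lemma tv_butlast: "tree_vert d x \<Longrightarrow> tree_vert d (butlast x)"
  unfolding tree_vert_def by (auto simp: nth_butlast)

lemma tv_single: "tree_vert d [i] \<longleftrightarrow> i < d"
  using tv_snoc[of d "[]" i] by (simp add: tree_vert_def)
lemma nbr_eq:
  assumes "tree_vert d x"
  shows "{y. tree_adj d x y} = (\<lambda>i. x@[i]) ` {..<(if x = [] then d else d - 1)} \<union> (if x = [] then {} else {butlast x})"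
proof (intro set_eqI iffI)
  fix y assume "y \<in> {y. tree_adj d x y}"
  hence "tree_vert d y" "(\<exists>i. y = x@[i]) \<or> (\<exists>i. x = y@[i])" unfolding tree_adj_def by auto
  thus "y \<in> (\<lambda>i. x@[i]) ` {..<(if x = [] then d else d - 1)} \<union> (if x = [] then {} else {butlast x})"
    by (auto simp: tv_snoc tv_single)
next
  fix y assume y: "y \<in> (\<lambda>i. x@[i]) ` {..<(if x = [] then d else d - 1)} \<union> (if x = [] then {} else {butlast x})"
  show "y \<in> {y. tree_adj d x y}"
  proof (cases "x = []")
    case True thus ?thesis using y assms unfolding tree_adj_def by (auto simp: tv_snoc tv_single)
  next
    case False
    from y False consider i where "i < d - 1" "y = x@[i]" | "y = butlast x" by auto
    thus ?thesis
    proof cases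
      case 1 thus ?thesis using assms False unfolding tree_adj_def by (auto simp: tv_snoc)
    next
      case 2
      have "x = y @ [last x]" using False 2 by simp
      thus ?thesis using assms tv_butlast[OF assms] 2 unfolding tree_adj_def by blast
    qed
  qed
qed

lemma nbr_card:
  assumes "d \<ge> 2" "tree_vert d x"
  shows "card {y. tree_adj d x y} = d" "finite {y. tree_adj d x y}"
proof -
  have inj: "inj (\<lambda>i. x@[i])" by (auto simp: inj_def)
  have c: "card ((\<lambda>i. x@[i]) ` {..<c}) = c" for c
    using inj by (simp add: card_image inj_on_def)
  show "finite {y. tree_adj d x y}" unfolding nbr_eq[OF assms(2)] by auto
  show "card {y. tree_adj d x y} = d"
  proof (cases "x = []")
    case True thus ?thesis unfolding nbr_eq[OF assms(2)] using c by simp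
  next
    case False
    have "butlast x \<notin> (\<lambda>i. x@[i]) ` {..<d-1}"
      using False by (auto dest: arg_cong[of _ _ length])
    thus ?thesis unfolding nbr_eq[OF assms(2)] using c False assms(1) by simp
  qed
qed

lemma deg_le:
  assumes "d \<ge> 2" "tree_vert d x"
  shows "degD d D x \<le> d"
  unfolding degD_def using nbr_card[OF assms]
  by (metis (no_types, lifting) card_mono mem_Collect_eq subsetI)

definition Ch :: "nat list set \<Rightarrow> nat list \<Rightarrow> nat list set" where
  "Ch D x = {y \<in> D. \<exists>i. y = x@[i]}"

lemma deg_split:
  assumes "domain d D" "x \<in> D"
  shows "degD d D x = card (Ch D x) + (if x \<noteq> [] \<and> butlast x \<in> D then 1 else 0)"
proof -
  have fin: "finite D" using assms unfolding domain_def by auto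
  have tv: "\<And>y. y \<in> D \<Longrightarrow> tree_vert d y" using assms(1) by (rule domain_tv)
  have eq: "{y\<in>D. tree_adj d x y} = Ch D x \<union> {y\<in>D. x \<noteq> [] \<and> y = butlast x}"
    unfolding Ch_def tree_adj_def using tv assms(2)
    by auto (metis append_butlast_last_id)+
  have disj: "Ch D x \<inter> {y\<in>D. x \<noteq> [] \<and> y = butlast x} = {}"
    unfolding Ch_def by (auto dest: arg_cong[of _ _ length])
  have c2: "card {y\<in>D. x \<noteq> [] \<and> y = butlast x} = (if x \<noteq> [] \<and> butlast x \<in> D then 1 else 0)"
  proof -
    have "{y\<in>D. x \<noteq> [] \<and> y = butlast x} = (if x \<noteq> [] \<and> butlast x \<in> D then {butlast x} else {})" by auto
    thus ?thesis by simp
  qed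
  have "finite (Ch D x)" using fin unfolding Ch_def by auto
  thus ?thesis unfolding degD_def eq using card_Un_disjoint[OF _ _ disj] fin c2 by simp
qed

lemma sum_deg:
  assumes "domain d D"
  shows "(\<Sum>x\<in>D. degD d D x) = 2 * card (Pset D)"
proof -
  have fin: "finite D" using assms unfolding domain_def by auto
  have "(\<Sum>x\<in>D. degD d D x) = (\<Sum>x\<in>D. card (Ch D x)) + (\<Sum>x\<in>D. if x \<noteq> [] \<and> butlast x \<in> D then 1 else 0)"
    using deg_split[OF assms] by (simp add: sum.distrib)
  also have "(\<Sum>x\<in>D. card (Ch D x)) = card (\<Union>x\<in>D. Ch D x)"
    by (rule card_UN_disjoint[symmetric]) (use fin in \<open>auto simp: Ch_def\<close>)
  also have "(\<Union>x\<in>D. Ch D x) = Pset D"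
    unfolding Ch_def Pset_def by auto (metis append_butlast_last_id)
  also have "(\<Sum>x\<in>D. if x \<noteq> [] \<and> butlast x \<in> D then 1 else 0) = card (Pset D)"
    unfolding Pset_def using fin by (simp add: sum.If_cases Int_def)
  finally show ?thesis by simp
qed

lemma key_id:
  assumes d: "d \<ge> 2" and D: "domain d D"
  shows "int (d - 1) * int (card (boundary d D)) = tau d D + int (d - 2) * int (card D) + 2"
proof -
  have fin: "finite D" using D unfolding domain_def by auto
  have BD: "boundary d D \<subseteq> D" unfolding boundary_def by auto
  have finB: "finite (boundary d D)" using fin BD finite_subset by blast
  have cP: "card (Pset D) + 1 = card D" by (rule card_Pset[OF D])
  have S: "(\<Sum>x\<in>D. int (degD d D x)) = 2 * int (card (Pset D))"
  proof -
    have "(\<Sum>x\<in>D. int (degD d D x)) = int (\<Sum>x\<in>D. degD d D x)" by simp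
    thus ?thesis using sum_deg[OF D] by simp
  qed
  have split: "(\<Sum>x\<in>D. int (degD d D x)) = (\<Sum>x\<in>boundary d D. int (degD d D x)) + (\<Sum>x\<in>D - boundary d D. int (degD d D x))"
    using sum.subset_diff[OF BD fin] by (simp add: add.commute)
  have "\<And>x. x \<in> D - boundary d D \<Longrightarrow> degD d D x = d"
  proof -
    fix x assume "x \<in> D - boundary d D"
    thus "degD d D x = d" using deg_le[OF d domain_tv[OF D], of x D] unfolding boundary_def by auto
  qed
  hence I: "(\<Sum>x\<in>D - boundary d D. int (degD d D x)) = int d * (int (card D) - int (card (boundary d D)))"
    using card_Diff_subset[OF finB BD] card_mono[OF fin BD] by (simp add: of_nat_diff)
  have T: "tau d D = (\<Sum>x\<in>boundary d D. int (degD d D x)) - int (card (boundary d D))"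
    unfolding tau_def by (simp add: sum_subtractf)
  have dd: "int (d - 1) = int d - 1" "int (d - 2) = int d - 2" using d by auto
  show ?thesis using S split I T cP unfolding dd by (simp add: algebra_simps)
qed

lemma deg_pos:
  assumes D: "domain d D" and c: "card D \<ge> 2" and x: "x \<in> D"
  shows "degD d D x \<ge> 1"
proof -
  have fin: "finite D" using D unfolding domain_def by auto
  obtain y where y: "y \<in> D" "y \<noteq> x"
  proof (rule ccontr)
    assume "\<not> thesis"
    hence "D \<subseteq> {x}" using that by blast
    hence "card D \<le> card {x}" by (intro card_mono) auto
    hence "card D \<le> 1" by simp
    with c show False by simp
  qed
  have "(x, y) \<in> (E d D)\<^sup>*" using domain_conn[OF D x y(1)] .
  then obtain z where "(x, z) \<in> E d D" using y(2) by (auto elim: converse_rtranclE)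
  hence "z \<in> {y \<in> D. tree_adj d x y}" by auto
  moreover have "finite {y \<in> D. tree_adj d x y}" using fin by auto
  ultimately have "card {y \<in> D. tree_adj d x y} > 0" by (auto simp: card_gt_0_iff)
  thus ?thesis unfolding degD_def by simp
qed

lemma tau_nonneg:
  assumes D: "domain d D" and c: "card D \<ge> 2"
  shows "tau d D \<ge> 0"
  unfolding tau_def using deg_pos[OF D c] unfolding boundary_def
  by (intro sum_nonneg) fastforce

lemma only_nbr:
  assumes D: "domain d D" and a: "a \<in> D" and y: "y \<notin> D" and ay: "tree_adj d a y"
    and x: "x \<in> D" and xy: "tree_adj d x y"
  shows "x = a"
proof -
  from ay have A: "(\<exists>i. y = a@[i]) \<or> (\<exists>i. a = y@[i])" unfolding tree_adj_def by blast
  from xy have X: "(\<exists>j. y = x@[j]) \<or> (\<exists>j. x = y@[j])" unfolding tree_adj_def by blast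
  show ?thesis
  proof (cases "\<exists>i. y = a@[i]")
    case True
    then obtain i where i: "y = a@[i]" by blast
    show ?thesis
    proof (cases "\<exists>j. y = x@[j]")
      case True then show ?thesis using i by auto
    next
      case False
      then obtain j where j: "x = y@[j]" using X by blast
      have "prefix y a" using reach_prefix[OF domain_conn[OF D x a], of y] y j by auto
      hence "length y \<le> length a" by (rule prefix_length_le)
      with i show ?thesis by simp
    qed
  next
    case False
    then obtain i where i: "a = y@[i]" using A by blast
    have pa: "prefix a x" using reach_prefix[OF domain_conn[OF D a x], of a] y i by auto
    show ?thesis
    proof (cases "\<exists>j. y = x@[j]")
      case True
      then obtain j where "y = x@[j]" by blast
      with pa i show ?thesis using prefix_length_le by fastforce
    next
      case False
      then obtain j where j: "x = y@[j]" using X by blast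
      with pa i show ?thesis by auto
    qed
  qed
qed

definition good :: "nat \<Rightarrow> nat list set \<Rightarrow> bool" where
  "good d D \<longleftrightarrow> domain d D \<and> (\<exists>a\<in>D. degD d D a < d \<and> (\<forall>x\<in>boundary d D. x \<noteq> a \<longrightarrow> degD d D x = 1))"

lemma good_base: "d \<ge> 2 \<Longrightarrow> good d {[]}"
proof -
  assume d: "d \<ge> 2"
  have "domain d {[]}" unfolding domain_def induced_connected_def tree_vert_def by auto
  moreover have "degD d {[]} [] = 0" unfolding degD_def using adj_irrefl by auto
  ultimately show ?thesis unfolding good_def boundary_def using d by auto
qed

lemma good_step:
  assumes d: "d \<ge> 2" and g: "good d D"
  shows "\<exists>D'. good d D' \<and> card D' = Suc (card D)"
proof -
  from g obtain a where D: "domain d D" and a: "a \<in> D" "degD d D a < d"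
    and bd: "\<forall>x\<in>boundary d D. x \<noteq> a \<longrightarrow> degD d D x = 1" unfolding good_def by blast
  have fin: "finite D" using D unfolding domain_def by auto
  have tva: "tree_vert d a" using domain_tv[OF D a(1)] .
  have "\<exists>y. tree_adj d a y \<and> y \<notin> D"
  proof (rule ccontr)
    assume "\<not> ?thesis"
    hence "{y. tree_adj d a y} \<subseteq> {y \<in> D. tree_adj d a y}" by auto
    hence "card {y. tree_adj d a y} \<le> card {y \<in> D. tree_adj d a y}"
      using fin by (intro card_mono) auto
    with nbr_card[OF d tva] a(2) show False unfolding degD_def by simp
  qed
  then obtain y where ay: "tree_adj d a y" and y: "y \<notin> D" by blast
  define D' where "D' = insert y D"
  have tvy: "tree_vert d y" using ay unfolding tree_adj_def by blast
  have only: "\<And>x. x \<in> D \<Longrightarrow> tree_adj d x y \<Longrightarrow> x = a" using only_nbr[OF D a(1) y ay] by blast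
  have dom': "domain d D'"
  proof -
    have sub: "E d D \<subseteq> E d D'" unfolding D'_def by auto
    have c1: "(u, v) \<in> (E d D')\<^sup>*" if "u \<in> D" "v \<in> D" for u v
      using rtrancl_mono[OF sub] domain_conn[OF D that] by blast
    have e1: "(y, a) \<in> E d D'" using adj_sym[OF ay] a(1) unfolding D'_def by simp
    have e2: "(a, y) \<in> E d D'" using ay a(1) unfolding D'_def by simp
    have ya: "(y, a) \<in> (E d D')\<^sup>*" "(a, y) \<in> (E d D')\<^sup>*"
      using r_into_rtrancl[OF e1] r_into_rtrancl[OF e2] .
    have conn: "(u, v) \<in> (E d D')\<^sup>*" if "u \<in> D'" "v \<in> D'" for u v
    proof -
      have uu: "u = y \<or> u \<in> D" "v = y \<or> v \<in> D" using that unfolding D'_def by auto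
      show ?thesis
      proof (cases "u = y")
        case True
        show ?thesis
        proof (cases "v = y")
          case True thus ?thesis using \<open>u = y\<close> by simp
        next
          case False
          hence "v \<in> D" using uu by simp
          thus ?thesis using \<open>u = y\<close> rtrancl_trans[OF ya(1) c1[OF a(1) \<open>v \<in> D\<close>]] by simp
        qed
      next
        case False
        hence uD: "u \<in> D" using uu by simp
        show ?thesis
        proof (cases "v = y")
          case True thus ?thesis using rtrancl_trans[OF c1[OF uD a(1)] ya(2)] by simp
        next
          case False
          hence "v \<in> D" using uu by simp
          thus ?thesis using c1 uD by blast
        qed
      qed
    qed
    have ic: "induced_connected d D'" unfolding induced_connected_def using conn by blast
    have "finite D'" "D' \<noteq> {}" "\<forall>x\<in>D'. tree_vert d x"
      using D tvy unfolding D'_def domain_def by auto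
    thus ?thesis using ic unfolding domain_def by blast
  qed
  have degx: "degD d D' x = degD d D x" if "x \<in> D" "x \<noteq> a" for x
  proof -
    have "\<not> tree_adj d x y" using only that by blast
    hence "{z \<in> D'. tree_adj d x z} = {z \<in> D. tree_adj d x z}" unfolding D'_def by auto
    thus ?thesis unfolding degD_def by simp
  qed
  have dega: "degD d D' a = Suc (degD d D a)"
  proof -
    have "{z \<in> D'. tree_adj d a z} = insert y {z \<in> D. tree_adj d a z}" unfolding D'_def using ay by auto
    thus ?thesis unfolding degD_def using fin y by simp
  qed
  have degy: "degD d D' y = 1"
  proof -
    have "{z \<in> D'. tree_adj d y z} = {a}"
    proof (intro set_eqI iffI)
      fix z assume z: "z \<in> {z \<in> D'. tree_adj d y z}"
      hence "z \<noteq> y" using adj_irrefl by auto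
      hence "z \<in> D" using z unfolding D'_def by auto
      moreover have "tree_adj d z y" using z adj_sym by blast
      ultimately show "z \<in> {a}" using only by blast
    next
      fix z assume "z \<in> {a}"
      thus "z \<in> {z \<in> D'. tree_adj d y z}" using adj_sym[OF ay] a(1) unfolding D'_def by auto
    qed
    thus ?thesis unfolding degD_def by simp
  qed
  have cD': "card D' = Suc (card D)" unfolding D'_def using fin y by simp
  have other: "degD d D' x = 1" if x: "x \<in> boundary d D'" "x \<noteq> a" "x \<noteq> y" for x
  proof -
    have xD: "x \<in> D" using x unfolding boundary_def D'_def by auto
    have e: "degD d D' x = degD d D x" using degx[OF xD x(2)] .
    have "degD d D x < d" using x(1) e unfolding boundary_def by simp
    hence "x \<in> boundary d D" using xD unfolding boundary_def by simp
    thus ?thesis using bd x(2) e by simp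
  qed
  have aD': "a \<in> D'" "y \<in> D'" using a(1) unfolding D'_def by auto
  have "good d D'"
  proof (cases "Suc (degD d D a) < d")
    case True
    have B: "\<forall>x\<in>boundary d D'. x \<noteq> a \<longrightarrow> degD d D' x = 1"
      using other degy by blast
    have "degD d D' a < d" using dega True by simp
    thus ?thesis unfolding good_def using dom' B aD' by blast
  next
    case False
    have na: "a \<notin> boundary d D'" using False dega unfolding boundary_def by simp
    have B: "\<forall>x\<in>boundary d D'. x \<noteq> y \<longrightarrow> degD d D' x = 1"
      using other na by blast
    have "degD d D' y < d" using degy d by simp
    thus ?thesis unfolding good_def using dom' B aD' by blast
  qed
  thus ?thesis using cD' by blast
qed

lemma good_exists:
  assumes d: "d \<ge> 2" and k: "k \<ge> 1"
  shows "\<exists>D. good d D \<and> card D = k"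
  using k
proof (induction k rule: nat_induct_at_least)
  case base thus ?case using good_base[OF d] by (intro exI[of _ "{[]}"]) auto
next
  case (Suc n)
  then obtain D where "good d D" "card D = n" by blast
  thus ?case using good_step[OF d] by metis
qed

lemma good_tau:
  assumes "good d D"
  shows "tau d D \<le> int d - 2"
proof -
  from assms obtain a where D: "domain d D" and a: "a \<in> D" "degD d D a < d"
    and bd: "\<forall>x\<in>boundary d D. x \<noteq> a \<longrightarrow> degD d D x = 1" unfolding good_def by blast
  have fin: "finite (boundary d D)" using D unfolding domain_def boundary_def by auto
  have aB: "a \<in> boundary d D" using a unfolding boundary_def by auto
  have "tau d D = (int (degD d D a) - 1) + (\<Sum>x\<in>boundary d D - {a}. int (degD d D x) - 1)"
    unfolding tau_def using sum.remove[OF fin aB] by simp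
  also have "(\<Sum>x\<in>boundary d D - {a}. int (degD d D x) - 1) = 0"
    using bd by (intro sum.neutral) auto
  finally show ?thesis using a(2) by simp
qed

theorem mainTheorem8:
  fixes d :: nat and D :: "nat list set"
  assumes "d \<ge> 2" and "domain d D" and "card D \<ge> 2"
  shows "card (boundary d D) = isoI d (card D) \<longleftrightarrow> tau d D \<le> int d - 2"
proof -
  note d = assms(1) and D = assms(2) and c = assms(3)
  define k where "k = card D"
  define S where "S = {card (boundary d D) | D. domain d D \<and> card D = k}"
  have iso: "isoI d k = Min S" unfolding isoI_def S_def by simp
  have finS: "finite S"
  proof -
    have "S \<subseteq> {..k}"
    proof
      fix s assume "s \<in> S"
      then obtain D' where "s = card (boundary d D')" "domain d D'" "card D' = k" unfolding S_def by blast
      moreover have "boundary d D' \<subseteq> D'" unfolding boundary_def by auto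
      ultimately show "s \<in> {..k}" using card_mono unfolding domain_def by fastforce
    qed
    thus ?thesis using finite_subset by blast
  qed
  have inS: "card (boundary d D) \<in> S" unfolding S_def k_def using D by blast
  have idD: "int (d - 1) * int (card (boundary d D)) = tau d D + int (d - 2) * int k + 2"
    using key_id[OF d D] unfolding k_def .
  have dd: "int (d - 1) = int d - 1" using d by auto
  show ?thesis
  proof
    assume eq: "card (boundary d D) = isoI d (card D)"
    show "tau d D \<le> int d - 2"
    proof (rule ccontr)
      assume nt: "\<not> ?thesis"
      have k1: "1 \<le> k" using c unfolding k_def by simp
      obtain D' where g: "good d D'" and cD': "card D' = k" using good_exists[OF d k1] by blast
      have D': "domain d D'" using g unfolding good_def by blast
      have id': "int (d - 1) * int (card (boundary d D')) = tau d D' + int (d - 2) * int k + 2"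
        using key_id[OF d D'] cD' by simp
      have t': "tau d D' \<le> int d - 2" by (rule good_tau[OF g])
      have "card (boundary d D') \<in> S" unfolding S_def using D' cD' by blast
      hence le: "card (boundary d D) \<le> card (boundary d D')" using eq iso Min_le[OF finS] unfolding k_def by simp
      have "int (d - 1) * int (card (boundary d D)) \<le> int (d - 1) * int (card (boundary d D'))"
        using le by (intro mult_left_mono) auto
      with idD id' t' nt show False by linarith
    qed
  next
    assume t: "tau d D \<le> int d - 2"
    have "Min S \<in> S" using finS inS by (intro Min_in) auto
    then obtain D' where D': "domain d D'" and cD': "card D' = k" and m: "Min S = card (boundary d D')"
      unfolding S_def by blast
    have id': "int (d - 1) * int (card (boundary d D')) = tau d D' + int (d - 2) * int k + 2"
      using key_id[OF d D'] cD' by simp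
    have t': "tau d D' \<ge> 0" using tau_nonneg[OF D'] cD' c unfolding k_def by simp
    have "card (boundary d D) \<le> card (boundary d D')"
    proof (rule ccontr)
      assume "\<not> ?thesis"
      hence "int (card (boundary d D)) \<ge> int (card (boundary d D')) + 1" by simp
      hence "int (d - 1) * int (card (boundary d D)) \<ge> int (d - 1) * (int (card (boundary d D')) + 1)"
        by (intro mult_left_mono) auto
      with idD id' t t' dd show False by (simp add: algebra_simps)
    qed
    moreover have "Min S \<le> card (boundary d D)" using Min_le[OF finS inS] .
    ultimately show "card (boundary d D) = isoI d (card D)" using m iso unfolding k_def by simp
  qed
qed

end
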